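(* Let $\mathbb{F}$ be a field, $n,m\ge 1$, and $B'_1,\dots,B'_n\in\mathrm{M}(n\times m,\mathbb{F})$. For $v\in\mathbb{F}^m$ let its right degree be the rank of the $n\times n$ matrix $[B'_1v,\dots,B'_nv]$. Let $\mathcal{A}\le\Lambda(n+m,\mathbb{F})$ be spanned by: $A_i=\begin{bmatrix}0&B'_i\\-B'^t_i&0\end{bmatrix}$ for $i\in[n]$; $C_{i,j}=e_ie_j^t-e_je_i^t$ for $1\le i<j\le n$; and $D_{k,\ell}=e_{n+k}e_{n+\ell}^t-e_{n+\ell}e_{n+k}^t$ for $1\le k<\ell\le m$ (here $e_1,\dots,e_{n+m}$ is the standard basis of $\mathbb{F}^{n+m}$). Then there exists a nonzero $v\in\mathbb{F}^m$ of right degree $<n$ if and only if $\mathcal{A}$ has an isotropic space of dimension $2$.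
   Context: $\Lambda(N,\mathbb{F})$ is the space of $N\times N$ alternating matrices. A subspace $U$ is an isotropic space of $\mathcal{A}$ if $u^tAu'=0$ for all $u,u'\in U$, $A\in\mathcal{A}$. *)

theory Defs
  imports "Jordan_Normal_Form.DL_Rank"
begin

(* Indices are 0-based: the paper's B'_1..B'_n are Bs 0 .. Bs (n-1),
   the standard basis e_1..e_{n+m} is e_0..e_{n+m-1}. *)

definition deg_matrix :: "nat \<Rightarrow> (nat \<Rightarrow> 'a::field mat) \<Rightarrow> 'a vec \<Rightarrow> 'a mat" where
  "deg_matrix n Bs v = mat_of_cols n (map (\<lambda>i. Bs i *\<^sub>v v) [0..<n])"

definition right_degree :: "nat \<Rightarrow> (nat \<Rightarrow> 'a::field mat) \<Rightarrow> 'a vec \<Rightarrow> nat" where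
  "right_degree n Bs v = vec_space.rank n (deg_matrix n Bs v)"

definition alt_unit :: "nat \<Rightarrow> nat \<Rightarrow> nat \<Rightarrow> 'a::field mat" where
  "alt_unit N i j = mat N N (\<lambda>(r,s). (if r = i \<and> s = j then 1 else 0) - (if r = j \<and> s = i then 1 else 0))"

definition block_alt :: "nat \<Rightarrow> nat \<Rightarrow> 'a::field mat \<Rightarrow> 'a mat" where
  "block_alt n m B = four_block_mat (0\<^sub>m n n) B (- transpose_mat B) (0\<^sub>m m m)"

definition gens :: "nat \<Rightarrow> nat \<Rightarrow> (nat \<Rightarrow> 'a::field mat) \<Rightarrow> 'a mat set" where
  "gens n m Bs =
     {block_alt n m (Bs i) | i. i < n}
   \<union> {alt_unit (n+m) i j | i j. i < j \<and> j < n}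
   \<union> {alt_unit (n+m) (n+k) (n+l) | k l. k < l \<and> l < m}"

definition mat_span :: "nat \<Rightarrow> 'a::field mat set \<Rightarrow> 'a mat set" where
  "mat_span N G = {mat N N (\<lambda>(r,s). \<Sum>g\<in>G. c g * g $$ (r,s)) | c. True}"

definition Aspace :: "nat \<Rightarrow> nat \<Rightarrow> (nat \<Rightarrow> 'a::field mat) \<Rightarrow> 'a mat set" where
  "Aspace n m Bs = mat_span (n+m) (gens n m Bs)"

definition isotropic :: "nat \<Rightarrow> 'a::field mat set \<Rightarrow> 'a vec set \<Rightarrow> bool" where
  "isotropic N \<A> U \<longleftrightarrow> subspace class_ring U (module_vec TYPE('a) N) \<and>
     (\<forall>u\<in>U. \<forall>u'\<in>U. \<forall>A\<in>\<A>. u \<bullet> (A *\<^sub>v u') = 0)"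

definition subspace_dim :: "nat \<Rightarrow> 'a::field vec set \<Rightarrow> nat" where
  "subspace_dim N U = vectorspace.dim class_ring ((module_vec TYPE('a) N)\<lparr>carrier := U\<rparr>)"

end

theory Submission
  imports Defs
begin


lemma sum_delta_cond:
  fixes x :: "nat \<Rightarrow> 'a::field"
  assumes "j < N"
  shows "(\<Sum>s<N. (if P \<and> s = j then x s else 0)) = (if P then x j else 0)"
proof (cases P)
  case True
  then show ?thesis using assms by (simp add: sum.delta')
qed simp

lemma ifdiff_mult: "((if A then 1 else 0) - (if B then 1 else 0)) * (x::'a::field) = (if A then x else 0) - (if B then x else 0)"
  by simp

lemma mult_ifdiff: "(y::'a::field) * ((if A then a else 0) - (if B then b else 0)) = (if True \<and> A then y * a else 0) - (if True \<and> B then y * b else 0)"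
  by (simp add: right_diff_distrib)

lemma alt_unit_form:
  fixes u u' :: "'a::field vec"
  assumes "i < N" "j < N" "i \<noteq> j" "u \<in> carrier_vec N" "u' \<in> carrier_vec N"
  shows "u \<bullet> (alt_unit N i j *\<^sub>v u') = u$i*u'$j - u$j*u'$i"
proof -
  have v: "alt_unit N i j *\<^sub>v u' = vec N (\<lambda>r. (if r=i then u'$j else 0) - (if r=j then u'$i else 0))"
  proof (rule eq_vecI)
    fix r assume r: "r < dim_vec (vec N (\<lambda>r. (if r=i then u'$j else 0) - (if r=j then u'$i else 0)))"
    hence r: "r < N" by simp
    have "(alt_unit N i j *\<^sub>v u') $ r = (\<Sum>s<N. ((if r = i \<and> s = j then 1 else 0) - (if r = j \<and> s = i then 1 else 0)) * u' $ s)"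
      using r assms unfolding alt_unit_def mult_mat_vec_def scalar_prod_def
      by (simp add: lessThan_atLeast0)
    also have "\<dots> = (\<Sum>s<N. (if r = i \<and> s = j then u'$s else 0) - (if r = j \<and> s = i then u'$s else 0))"
      by (simp only: ifdiff_mult)
    also have "\<dots> = (\<Sum>s<N. (if r = i \<and> s = j then u'$s else 0)) - (\<Sum>s<N. (if r = j \<and> s = i then u'$s else 0))"
      by (rule sum_subtractf)
    also have "\<dots> = (if r=i then u'$j else 0) - (if r=j then u'$i else 0)"
      using assms by (simp only: sum_delta_cond)
    finally show "(alt_unit N i j *\<^sub>v u') $ r = vec N (\<lambda>r. (if r=i then u'$j else 0) - (if r=j then u'$i else 0)) $ r"
      using r by simp
  qed (auto simp: alt_unit_def)
  have "u \<bullet> (alt_unit N i j *\<^sub>v u') = (\<Sum>r<N. u$r * ((if r=i then u'$j else 0) - (if r=j then u'$i else 0)))"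
    unfolding v scalar_prod_def using assms by (simp add: lessThan_atLeast0)
  also have "\<dots> = (\<Sum>r<N. (if True \<and> r=i then u$r * u'$j else 0) - (if True \<and> r=j then u$r*u'$i else 0))"
    by (simp only: mult_ifdiff)
  also have "\<dots> = (\<Sum>r<N. (if True \<and> r=i then u$r * u'$j else 0)) - (\<Sum>r<N. (if True \<and> r=j then u$r*u'$i else 0))"
    by (rule sum_subtractf)
  also have "\<dots> = u$i*u'$j - u$j*u'$i" using assms by (simp only: sum_delta_cond if_True)
  finally show ?thesis .
qed

lemma block_form:
  fixes B :: "'a::field mat"
  assumes B: "B \<in> carrier_mat n m" and x: "x \<in> carrier_vec n" "x' \<in> carrier_vec n"
    and y: "y \<in> carrier_vec m" "y' \<in> carrier_vec m"
  shows "(x @\<^sub>v y) \<bullet> (block_alt n m B *\<^sub>v (x' @\<^sub>v y')) = x \<bullet> (B *\<^sub>v y') - x' \<bullet> (B *\<^sub>v y)"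
proof -
  have "block_alt n m B *\<^sub>v (x' @\<^sub>v y') = (0\<^sub>m n n *\<^sub>v x' + B *\<^sub>v y') @\<^sub>v (- transpose_mat B *\<^sub>v x' + 0\<^sub>m m m *\<^sub>v y')"
    unfolding block_alt_def by (rule four_block_mat_mult_vec) (use assms in auto)
  also have "\<dots> = (B *\<^sub>v y') @\<^sub>v (- (transpose_mat B *\<^sub>v x'))"
    using assms by auto
  finally have e: "block_alt n m B *\<^sub>v (x' @\<^sub>v y') = (B *\<^sub>v y') @\<^sub>v (- (transpose_mat B *\<^sub>v x'))" .
  have "(x @\<^sub>v y) \<bullet> ((B *\<^sub>v y') @\<^sub>v (- (transpose_mat B *\<^sub>v x'))) = x \<bullet> (B *\<^sub>v y') + y \<bullet> (- (transpose_mat B *\<^sub>v x'))"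
    by (rule scalar_prod_append) (use assms in auto)
  also have "y \<bullet> (- (transpose_mat B *\<^sub>v x')) = - (y \<bullet> (transpose_mat B *\<^sub>v x'))"
    using assms by (auto intro!: scalar_prod_uminus_right)
  also have "y \<bullet> (transpose_mat B *\<^sub>v x') = (transpose_mat B *\<^sub>v x') \<bullet> y"
    using assms by (intro comm_scalar_prod[of _ m]) auto
  also have "\<dots> = x' \<bullet> (B *\<^sub>v y)" by (rule transpose_vec_mult_scalar) (use assms in auto)
  finally show ?thesis unfolding e by simp
qed

lemma bil_expand:
  fixes A :: "'a::field mat"
  assumes "A \<in> carrier_mat N N" "u \<in> carrier_vec N" "u' \<in> carrier_vec N"
  shows "u \<bullet> (A *\<^sub>v u') = (\<Sum>r<N. \<Sum>s<N. u$r * A$$(r,s) * u'$s)"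
proof -
  have e: "(A *\<^sub>v u')$r = (\<Sum>s<N. A$$(r,s) * u'$s)" if "r < N" for r
    using assms that by (simp add: scalar_prod_def lessThan_atLeast0)
  have "u \<bullet> (A *\<^sub>v u') = (\<Sum>r<N. u$r * (A *\<^sub>v u')$r)"
    using assms by (simp add: scalar_prod_def lessThan_atLeast0)
  also have "\<dots> = (\<Sum>r<N. u$r * (\<Sum>s<N. A$$(r,s) * u'$s))"
    by (rule sum.cong[OF refl]) (simp add: e)
  also have "\<dots> = (\<Sum>r<N. \<Sum>s<N. u$r * A$$(r,s) * u'$s)"
    by (simp add: sum_distrib_left mult.assoc)
  finally show ?thesis .
qed

lemma aspace_form:
  fixes u u' :: "'a::field vec"
  assumes G: "\<And>g. g \<in> G \<Longrightarrow> g \<in> carrier_mat N N" and u: "u \<in> carrier_vec N" "u' \<in> carrier_vec N"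
    and M: "M \<in> mat_span N G"
  shows "\<exists>c. u \<bullet> (M *\<^sub>v u') = (\<Sum>g\<in>G. c g * (u \<bullet> (g *\<^sub>v u')))"
proof -
  from M obtain c where Mc: "M = mat N N (\<lambda>(r,s). \<Sum>g\<in>G. c g * g $$ (r,s))" unfolding mat_span_def by auto
  have "u \<bullet> (M *\<^sub>v u') = (\<Sum>r<N. \<Sum>s<N. u$r * M$$(r,s) * u'$s)"
    by (rule bil_expand) (use u Mc in auto)
  also have "\<dots> = (\<Sum>r<N. \<Sum>s<N. \<Sum>g\<in>G. c g * (u$r * g$$(r,s) * u'$s))"
    by (rule sum.cong[OF refl], rule sum.cong[OF refl]) (simp add: Mc sum_distrib_left sum_distrib_right mult_ac)
  also have "\<dots> = (\<Sum>g\<in>G. c g * (\<Sum>r<N. \<Sum>s<N. u$r * g$$(r,s) * u'$s))"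
    by (simp add: sum_distrib_left sum.swap[of _ G])
  also have "\<dots> = (\<Sum>g\<in>G. c g * (u \<bullet> (g *\<^sub>v u')))"
  proof (rule sum.cong[OF refl])
    fix g assume "g \<in> G"
    then show "c g * (\<Sum>r<N. \<Sum>s<N. u$r * g$$(r,s) * u'$s) = c g * (u \<bullet> (g *\<^sub>v u'))"
      using bil_expand[OF G[OF \<open>g \<in> G\<close>] u] by simp
  qed
  finally show ?thesis by blast
qed

lemma gens_carrier:
  assumes "\<And>i. i < n \<Longrightarrow> Bs i \<in> carrier_mat n m" "g \<in> gens n m Bs"
  shows "g \<in> carrier_mat (n+m) (n+m)"
  using assms unfolding gens_def block_alt_def alt_unit_def by auto

lemma gens_finite: "finite (gens n m Bs)"
proof -
  have h1: "{block_alt n m (Bs i) | i. i < n} = (\<lambda>i. block_alt n m (Bs i)) ` {..<n}" by auto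
  have h2: "{alt_unit (n+m) i j | i j. i < j \<and> j < n} \<subseteq> (\<lambda>(i,j). alt_unit (n+m) i j) ` ({..<n} \<times> {..<n})" by auto
  have h3: "{alt_unit (n+m) (n+k) (n+l) | k l. k < l \<and> l < m} \<subseteq> (\<lambda>(k,l). alt_unit (n+m) (n+k) (n+l)) ` ({..<m} \<times> {..<m})" by auto
  have f1: "finite {block_alt n m (Bs i) | i. i < n}" unfolding h1 by simp
  have f2: "finite {alt_unit (n+m) i j | i j. i < j \<and> j < n}" by (rule finite_subset[OF h2]) simp
  have f3: "finite {alt_unit (n+m) (n+k) (n+l) | k l. k < l \<and> l < m}" by (rule finite_subset[OF h3]) simp
  show ?thesis unfolding gens_def using f1 f2 f3 by simp
qed

lemma if_one_mult: "(if A then 1 else 0) * (x::'a::field) = (if A then x else 0)" by simp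

lemma gen_in_span:
  assumes "finite G" "g \<in> G" "g \<in> carrier_mat N N"
  shows "g \<in> mat_span N G"
proof -
  have d: "(\<Sum>g'\<in>G. (if g' = g then 1 else 0) * g' $$ (r,s)) = g $$ (r,s)" for r s
  proof -
    have "(\<Sum>g'\<in>G. (if g' = g then 1 else 0) * g' $$ (r,s)) = (\<Sum>g'\<in>G. if g' = g then g' $$ (r,s) else 0)"
      by (simp only: if_one_mult)
    also have "\<dots> = g $$ (r,s)" using assms by (simp add: sum.delta')
    finally show ?thesis .
  qed
  have "mat N N (\<lambda>(r,s). \<Sum>g'\<in>G. (if g' = g then 1 else 0) * g' $$ (r,s)) = g"
    using assms by (intro eq_matI) (auto simp: d)
  thus ?thesis unfolding mat_span_def
    by (intro CollectI exI[where x="\<lambda>g'. if g' = g then 1 else 0"]) simp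
qed


lemma deg_matrix_carrier: "deg_matrix n Bs v \<in> carrier_mat n n"
  unfolding deg_matrix_def using mat_of_cols_carrier(1)[of n "map (\<lambda>i. Bs i *\<^sub>v v) [0..<n]"] by simp

lemma deg_matrix_dims[simp]: "dim_row (deg_matrix n Bs v) = n" "dim_col (deg_matrix n Bs v) = n"
  using deg_matrix_carrier[of n Bs v] by auto

lemma degT:
  fixes Bs :: "nat \<Rightarrow> 'a::field mat"
  assumes B: "\<And>i. i < n \<Longrightarrow> Bs i \<in> carrier_mat n m" and v: "v \<in> carrier_vec m" and w: "w \<in> carrier_vec n"
  shows "(transpose_mat (deg_matrix n Bs v) *\<^sub>v w = 0\<^sub>v n) \<longleftrightarrow> (\<forall>i<n. w \<bullet> (Bs i *\<^sub>v v) = 0)"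
proof -
  have e: "(transpose_mat (deg_matrix n Bs v) *\<^sub>v w) $ i = w \<bullet> (Bs i *\<^sub>v v)" if i: "i < n" for i
  proof -
    have c: "col (deg_matrix n Bs v) i = Bs i *\<^sub>v v"
      unfolding deg_matrix_def using i B[OF i] v by (subst col_mat_of_cols) auto
    have "(transpose_mat (deg_matrix n Bs v) *\<^sub>v w) $ i = row (transpose_mat (deg_matrix n Bs v)) i \<bullet> w"
      using i deg_matrix_carrier[of n Bs v] by simp
    also have "\<dots> = (Bs i *\<^sub>v v) \<bullet> w" using i deg_matrix_carrier[of n Bs v] c by simp
    also have "\<dots> = w \<bullet> (Bs i *\<^sub>v v)" using B[OF i] w v by (intro comm_scalar_prod[of _ n]) auto
    finally show ?thesis .
  qed
  have d: "transpose_mat (deg_matrix n Bs v) *\<^sub>v w \<in> carrier_vec n" using deg_matrix_carrier[of n Bs v] unfolding carrier_vec_def carrier_mat_def by simp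
  show ?thesis
  proof
    assume "transpose_mat (deg_matrix n Bs v) *\<^sub>v w = 0\<^sub>v n"
    then show "\<forall>i<n. w \<bullet> (Bs i *\<^sub>v v) = 0" using e by (metis index_zero_vec(1))
  next
    assume "\<forall>i<n. w \<bullet> (Bs i *\<^sub>v v) = 0"
    then show "transpose_mat (deg_matrix n Bs v) *\<^sub>v w = 0\<^sub>v n" using e d by (intro eq_vecI) auto
  qed
qed

lemma rd_lt_iff:
  fixes Bs :: "nat \<Rightarrow> 'a::field mat"
  shows "right_degree n Bs v < n \<longleftrightarrow> (\<exists>w\<in>carrier_vec n. w \<noteq> 0\<^sub>v n \<and> transpose_mat (deg_matrix n Bs v) *\<^sub>v w = 0\<^sub>v n)"
proof -
  let ?M = "deg_matrix n Bs v"
  have M: "?M \<in> carrier_mat n n" by (rule deg_matrix_carrier)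
  have "right_degree n Bs v < n \<longleftrightarrow> vec_space.rank n ?M \<noteq> n"
    unfolding right_degree_def using vec_space.rank_le_nc[OF M] by auto
  also have "\<dots> \<longleftrightarrow> det ?M = 0" using vec_space.det_rank_iff[OF M] by auto
  also have "\<dots> \<longleftrightarrow> det (transpose_mat ?M) = 0" using det_transpose[OF M] by simp
  also have "\<dots> \<longleftrightarrow> (\<exists>w\<in>carrier_vec n. w \<noteq> 0\<^sub>v n \<and> transpose_mat ?M *\<^sub>v w = 0\<^sub>v n)"
    using det_0_iff_vec_prod_zero_field[of "transpose_mat ?M" n] M by auto
  finally show ?thesis .
qed


lemma gens_zero:
  fixes Bs :: "nat \<Rightarrow> 'a::field mat"
  assumes B: "\<And>i. i < n \<Longrightarrow> Bs i \<in> carrier_mat n m" and w: "w \<in> carrier_vec n" and v: "v \<in> carrier_vec m"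
    and wB: "\<forall>i<n. w \<bullet> (Bs i *\<^sub>v v) = 0" and g: "g \<in> gens n m Bs"
  shows "((a \<cdot>\<^sub>v w) @\<^sub>v (b \<cdot>\<^sub>v v)) \<bullet> (g *\<^sub>v ((a' \<cdot>\<^sub>v w) @\<^sub>v (b' \<cdot>\<^sub>v v))) = 0"
proof -
  let ?u = "(a \<cdot>\<^sub>v w) @\<^sub>v (b \<cdot>\<^sub>v v)" and ?u' = "(a' \<cdot>\<^sub>v w) @\<^sub>v (b' \<cdot>\<^sub>v v)"
  have uc: "?u \<in> carrier_vec (n+m)" "?u' \<in> carrier_vec (n+m)" using w v by auto
  have ui: "?u $ i = a * w $ i" "?u' $ i = a' * w $ i" if "i < n" for i
    using that w v by auto
  have uj: "?u $ (n+k) = b * v $ k" "?u' $ (n+k) = b' * v $ k" if "k < m" for k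
    using that w v by auto
  from g consider (A) i where "i < n" "g = block_alt n m (Bs i)"
    | (C) i j where "i < j" "j < n" "g = alt_unit (n+m) i j"
    | (D) k l where "k < l" "l < m" "g = alt_unit (n+m) (n+k) (n+l)"
    unfolding gens_def by blast
  then show ?thesis
  proof cases
    case A
    have Bi: "Bs i \<in> carrier_mat n m" using B A by auto
    have "?u \<bullet> (g *\<^sub>v ?u') = (a \<cdot>\<^sub>v w) \<bullet> (Bs i *\<^sub>v (b' \<cdot>\<^sub>v v)) - (a' \<cdot>\<^sub>v w) \<bullet> (Bs i *\<^sub>v (b \<cdot>\<^sub>v v))"
      unfolding A by (rule block_form[OF Bi]) (use w v in auto)
    also have "\<dots> = a * b' * (w \<bullet> (Bs i *\<^sub>v v)) - a' * b * (w \<bullet> (Bs i *\<^sub>v v))"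
      using Bi w v by (simp add: mult_mat_vec[OF Bi v] mult.assoc)
    also have "\<dots> = 0" using wB A by simp
    finally show ?thesis .
  next
    case C
    have "?u \<bullet> (g *\<^sub>v ?u') = ?u $ i * ?u' $ j - ?u $ j * ?u' $ i"
      unfolding C by (rule alt_unit_form) (use C uc in auto)
    also have "\<dots> = 0" using C by (simp add: ui)
    finally show ?thesis .
  next
    case D
    have "?u \<bullet> (g *\<^sub>v ?u') = ?u $ (n+k) * ?u' $ (n+l) - ?u $ (n+l) * ?u' $ (n+k)"
      unfolding D by (rule alt_unit_form) (use D uc in auto)
    also have "\<dots> = 0" using D by (simp add: uj)
    finally show ?thesis .
  qed
qed


lemma nz_index: assumes "x \<in> carrier_vec N" "x \<noteq> 0\<^sub>v N" shows "\<exists>k<N. x $ k \<noteq> 0"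
proof (rule ccontr)
  assume "\<not> (\<exists>k<N. x $ k \<noteq> 0)"
  then have "x = 0\<^sub>v N" using assms(1) by (intro eq_vecI) auto
  then show False using assms(2) by simp
qed

lemma combo_add:
  assumes "w \<in> carrier_vec n" "v \<in> carrier_vec m"
  shows "((a \<cdot>\<^sub>v w) @\<^sub>v (b \<cdot>\<^sub>v v)) + ((a' \<cdot>\<^sub>v w) @\<^sub>v (b' \<cdot>\<^sub>v v)) = ((a + a') \<cdot>\<^sub>v w) @\<^sub>v ((b + b') \<cdot>\<^sub>v (v :: 'a::field vec))"
  using assms by (intro eq_vecI) (auto simp: algebra_simps)

lemma combo_smult:
  assumes "w \<in> carrier_vec n" "v \<in> carrier_vec m"
  shows "c \<cdot>\<^sub>v ((a \<cdot>\<^sub>v w) @\<^sub>v (b \<cdot>\<^sub>v v)) = ((c * a) \<cdot>\<^sub>v w) @\<^sub>v ((c * b) \<cdot>\<^sub>v (v :: 'a::field vec))"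
  using assms by (intro eq_vecI) (auto simp: algebra_simps)

lemma combo_zero:
  assumes "w \<in> carrier_vec n" "v \<in> carrier_vec m"
  shows "0\<^sub>v (n+m) = ((0::'a::field) \<cdot>\<^sub>v w) @\<^sub>v (0 \<cdot>\<^sub>v v)"
  using assms by (intro eq_vecI) auto

lemma fwd:
  fixes Bs :: "nat \<Rightarrow> 'a::field mat"
  assumes B: "\<And>i. i < n \<Longrightarrow> Bs i \<in> carrier_mat n m" and v: "v \<in> carrier_vec m" "v \<noteq> 0\<^sub>v m"
    and rd: "right_degree n Bs v < n"
  shows "\<exists>U. isotropic (n+m) (Aspace n m Bs) U \<and> subspace_dim (n+m) U = 2"
proof -
  obtain w where w: "w \<in> carrier_vec n" "w \<noteq> 0\<^sub>v n" "transpose_mat (deg_matrix n Bs v) *\<^sub>v w = 0\<^sub>v n"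
    using rd unfolding rd_lt_iff by blast
  have wB: "\<forall>i<n. w \<bullet> (Bs i *\<^sub>v v) = 0" using degT[of n Bs m, OF B v(1) w(1)] w(3) by blast
  interpret V: vec_space "TYPE('a)" "n+m" .
  define T where "T = {(a \<cdot>\<^sub>v w) @\<^sub>v (b \<cdot>\<^sub>v v) | a b. True}"
  define w0 where "w0 = (1 \<cdot>\<^sub>v w) @\<^sub>v (0 \<cdot>\<^sub>v v)"
  define v0 where "v0 = (0 \<cdot>\<^sub>v w) @\<^sub>v (1 \<cdot>\<^sub>v v)"
  have S: "{w0, v0} \<subseteq> carrier_vec (n+m)" using w v unfolding w0_def v0_def by auto
  have ST: "{w0, v0} \<subseteq> T" unfolding T_def w0_def v0_def by blast
  have subT: "submodule class_ring T (module_vec TYPE('a) (n+m))"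
  proof (rule submodule.intro)
    show "module class_ring (module_vec TYPE('a) (n+m))" by (rule V.module_axioms)
    show "T \<subseteq> carrier (module_vec TYPE('a) (n+m))" using w v by (auto simp: T_def)
  next
    fix x y assume "x \<in> T" "y \<in> T"
    then show "x \<oplus>\<^bsub>module_vec TYPE('a) (n+m)\<^esub> y \<in> T"
      unfolding T_def using combo_add[OF w(1) v(1)] by (auto, blast)
  next
    show "\<zero>\<^bsub>module_vec TYPE('a) (n+m)\<^esub> \<in> T"
      unfolding T_def using combo_zero[OF w(1) v(1)] by auto
  next
    fix c :: 'a and x assume "c \<in> carrier class_ring" "x \<in> T"
    then show "c \<odot>\<^bsub>module_vec TYPE('a) (n+m)\<^esub> x \<in> T"
      unfolding T_def using combo_smult[OF w(1) v(1)] by (auto, blast)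
  qed
  define U where "U = V.span {w0, v0}"
  have UT: "U \<subseteq> T" unfolding U_def by (rule V.span_is_subset[OF ST subT])
  have sub: "subspace class_ring U (module_vec TYPE('a) (n+m))"
    unfolding U_def by (rule V.span_is_subspace[OF S])
  have iso: "isotropic (n+m) (Aspace n m Bs) U"
    unfolding isotropic_def
  proof (intro conjI sub ballI)
    fix u u' A assume "u \<in> U" "u' \<in> U" "A \<in> Aspace n m Bs"
    then obtain a b a' b' where u: "u = (a \<cdot>\<^sub>v w) @\<^sub>v (b \<cdot>\<^sub>v v)" and u': "u' = (a' \<cdot>\<^sub>v w) @\<^sub>v (b' \<cdot>\<^sub>v v)"
      using UT unfolding T_def by blast
    have uc: "u \<in> carrier_vec (n+m)" "u' \<in> carrier_vec (n+m)" using u u' w v by auto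
    obtain c where "u \<bullet> (A *\<^sub>v u') = (\<Sum>g\<in>gens n m Bs. c g * (u \<bullet> (g *\<^sub>v u')))"
      using aspace_form[OF gens_carrier[of n Bs m, OF B] uc, where M=A] \<open>A \<in> Aspace n m Bs\<close> unfolding Aspace_def by blast
    also have "\<dots> = 0" unfolding u u' using gens_zero[of n Bs m, OF B w(1) v(1) wB] by simp
    finally show "u \<bullet> (A *\<^sub>v u') = 0" .
  qed
  have ne: "w0 \<noteq> v0"
  proof
    assume "w0 = v0"
    obtain k where k: "k < n" "w $ k \<noteq> 0" using nz_index[OF w(1) w(2)] by blast
    have "w0 $ k = w $ k" "v0 $ k = 0" using k w v unfolding w0_def v0_def by auto
    with k \<open>w0 = v0\<close> show False by simp
  qed
  have li: "V.lin_indpt {w0, v0}"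
  proof
    assume "V.lin_dep {w0, v0}"
    from V.finite_lin_dep[OF _ this S] obtain f z where
      f: "V.lincomb f {w0, v0} = 0\<^sub>v (n+m)" "z \<in> {w0, v0}" "f z \<noteq> 0" by auto
    have ix: "V.lincomb f {w0, v0} $ i = f w0 * w0 $ i + f v0 * v0 $ i" if "i < n+m" for i
      using V.lincomb_index[OF that S] ne by simp
    obtain k where k: "k < n" "w $ k \<noteq> 0" using nz_index[OF w(1) w(2)] by blast
    obtain l where l: "l < m" "v $ l \<noteq> 0" using nz_index[OF v(1) v(2)] by blast
    have "f w0 * w $ k = 0" using ix[of k] f(1) k w v unfolding w0_def v0_def by auto
    then have fw: "f w0 = 0" using k by simp
    have "f v0 * v $ l = 0" using ix[of "n+l"] f(1) l w v unfolding w0_def v0_def by auto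
    then have fv: "f v0 = 0" using l by simp
    show False using f(2,3) fw fv by auto
  qed
  have max: "maximal {w0, v0} (\<lambda>T. T \<subseteq> {w0, v0} \<and> V.lin_indpt T)"
    unfolding maximal_def using li by auto
  have "vectorspace.dim class_ring (V.span_vs {w0, v0}) = card {w0, v0}"
    by (rule V.dim_span[OF S _ max]) simp
  then have "subspace_dim (n+m) U = 2" unfolding subspace_dim_def U_def using ne by simp
  with iso show ?thesis by blast
qed


lemma find_zero_combo:
  fixes a b :: "'a::field vec"
  assumes sub: "submodule class_ring U (module_vec TYPE('a) N)" and ab: "a \<in> U" "b \<in> U"
    and Uc: "U \<subseteq> carrier_vec N"
    and indep: "\<And>\<alpha> \<beta>. \<alpha> \<cdot>\<^sub>v a + \<beta> \<cdot>\<^sub>v b = 0\<^sub>v N \<Longrightarrow> \<alpha> = 0 \<and> \<beta> = 0"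
    and rel: "\<And>i j. i \<in> I \<Longrightarrow> j \<in> I \<Longrightarrow> a$i*b$j = a$j*b$i"
    and IN: "I \<subseteq> {..<N}"
  shows "\<exists>c\<in>U. c \<noteq> 0\<^sub>v N \<and> (\<forall>i\<in>I. c$i = 0)"
proof -
  have ac: "a \<in> carrier_vec N" "b \<in> carrier_vec N" using ab Uc by auto
  have sm: "x \<in> U \<Longrightarrow> c \<cdot>\<^sub>v x \<in> U" for c x
    using submodule.smult_closed[OF sub, of c x] by (simp add: module_vec_simps)
  have ad: "x \<in> U \<Longrightarrow> y \<in> U \<Longrightarrow> x + y \<in> U" for x y
    using submodule.m_closed[OF sub, of x y] by (simp add: module_vec_simps)
  show ?thesis
  proof (cases "\<forall>i\<in>I. a$i = 0")
    case True
    have "a \<noteq> 0\<^sub>v N"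
    proof
      assume "a = 0\<^sub>v N"
      then have "1 \<cdot>\<^sub>v a + 0 \<cdot>\<^sub>v b = 0\<^sub>v N" using ac by auto
      then show False using indep by fastforce
    qed
    then show ?thesis using True ab by blast
  next
    case False
    then obtain k where k: "k \<in> I" "a$k \<noteq> 0" by blast
    define c where "c = b$k \<cdot>\<^sub>v a + (- a$k) \<cdot>\<^sub>v b"
    have cU: "c \<in> U" unfolding c_def using ab by (intro ad sm)
    have "c \<noteq> 0\<^sub>v N"
    proof
      assume "c = 0\<^sub>v N"
      then have "- a$k = 0" using indep[of "b$k" "- a$k"] unfolding c_def by blast
      then show False using k by simp
    qed
    moreover have "\<forall>i\<in>I. c$i = 0"
    proof
      fix i assume i: "i \<in> I"
      have iN: "i < N" using i IN by auto
      have "c$i = b$k * a$i - a$k * b$i" unfolding c_def using iN ac by simp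
      also have "\<dots> = 0" using rel[OF i k(1)] by (simp add: mult.commute)
      finally show "c$i = 0" .
    qed
    ultimately show ?thesis using cU by blast
  qed
qed


lemma bwd:
  fixes Bs :: "nat \<Rightarrow> 'a::field mat"
  assumes B: "\<And>i. i < n \<Longrightarrow> Bs i \<in> carrier_mat n m"
    and iso: "isotropic (n+m) (Aspace n m Bs) U" and dim: "subspace_dim (n+m) U = 2"
  shows "\<exists>v \<in> carrier_vec m. v \<noteq> 0\<^sub>v m \<and> right_degree n Bs v < n"
proof -
  interpret V: vec_space "TYPE('a)" "n+m" .
  have sub: "subspace class_ring U (module_vec TYPE('a) (n+m))" and
    Z: "\<And>u u' A. u \<in> U \<Longrightarrow> u' \<in> U \<Longrightarrow> A \<in> Aspace n m Bs \<Longrightarrow> u \<bullet> (A *\<^sub>v u') = 0"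
    using iso unfolding isotropic_def by auto
  have submod: "submodule class_ring U (module_vec TYPE('a) (n+m))" using V.is_module[OF sub] .
  have Uc: "U \<subseteq> carrier_vec (n+m)" using submodule.subset[OF submod] by simp
  have vsU: "vectorspace class_ring (V.vs U)" by (rule V.subspace_is_vs[OF sub])
  let ?P = "\<lambda>S. S \<subseteq> carrier (V.vs U) \<and> \<not> module.lin_dep class_ring (V.vs U) S"
  have Peq: "module.lin_dep class_ring (V.vs U) S = V.lin_dep S" if "S \<subseteq> U" for S
    using V.span_li_not_depend(2)[OF that submod] by simp
  have bound: "finite S \<and> card S \<le> n+m" if "?P S" for S
  proof -
    have SU: "S \<subseteq> U" using that by simp
    have li: "\<not> V.lin_dep S" using that Peq[OF SU] by simp
    have Sc: "S \<subseteq> carrier_vec (n+m)" using SU Uc by auto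
    show ?thesis using V.li_le_dim[OF V.fin_dim Sc li] V.dim_is_n by simp
  qed
  have P0: "?P {}" using Peq[of "{}"] unfolding V.lin_dep_def by auto
  obtain A where A: "finite A" "maximal A ?P"
    using maximal_exists[of ?P "n+m" "{}", OF bound P0] by blast
  have basis: "vectorspace.basis class_ring (V.vs U) A"
    by (rule vectorspace.max_li_is_basis[OF vsU A(2)])
  have "vectorspace.dim class_ring (V.vs U) = card A"
    by (rule vectorspace.dim_basis[OF vsU A(1) basis])
  then have cA: "card A = 2" using dim unfolding subspace_dim_def by simp
  have AU: "A \<subseteq> U" using basis unfolding vectorspace.basis_def[OF vsU] by simp
  have "\<not> module.lin_dep class_ring (V.vs U) A" using basis unfolding vectorspace.basis_def[OF vsU] by blast
  then have liA: "\<not> V.lin_dep A" using Peq[OF AU] by blast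
  from cA obtain a b where ab: "A = {a, b}" "a \<noteq> b" unfolding card_2_iff by blast
  have abU: "a \<in> U" "b \<in> U" using AU ab by auto
  have abc: "a \<in> carrier_vec (n+m)" "b \<in> carrier_vec (n+m)" using abU Uc by auto
  have Sc: "{a, b} \<subseteq> carrier_vec (n+m)" using abc by auto
  have indep: "\<alpha> = 0 \<and> \<beta> = 0" if eq: "\<alpha> \<cdot>\<^sub>v a + \<beta> \<cdot>\<^sub>v b = 0\<^sub>v (n+m)" for \<alpha> \<beta>
  proof (rule ccontr)
    assume nz: "\<not> (\<alpha> = 0 \<and> \<beta> = 0)"
    define f where "f = (\<lambda>x. if x = a then \<alpha> else \<beta>)"
    have lc: "V.lincomb f {a, b} = \<alpha> \<cdot>\<^sub>v a + \<beta> \<cdot>\<^sub>v b"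
    proof (rule eq_vecI)
      show "dim_vec (V.lincomb f {a, b}) = dim_vec (\<alpha> \<cdot>\<^sub>v a + \<beta> \<cdot>\<^sub>v b)"
        using V.lincomb_dim[of "{a,b}" f] Sc abc by simp
      fix i assume "i < dim_vec (\<alpha> \<cdot>\<^sub>v a + \<beta> \<cdot>\<^sub>v b)"
      then have i: "i < n+m" using abc by simp
      show "V.lincomb f {a, b} $ i = (\<alpha> \<cdot>\<^sub>v a + \<beta> \<cdot>\<^sub>v b) $ i"
        using V.lincomb_index[OF i Sc] ab(2) i abc by (simp add: f_def)
    qed
    have "V.lin_dep {a, b}"
    proof (cases "\<alpha> = 0")
      case True
      then have "\<beta> \<noteq> 0" using nz by simp
      then show ?thesis using V.lin_dep_crit[where A="{a,b}" and S="{a,b}" and a=f and v=b] lc eq ab(2) by (simp add: f_def)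
    next
      case False
      then show ?thesis using V.lin_dep_crit[where A="{a,b}" and S="{a,b}" and a=f and v=a] lc eq by (simp add: f_def)
    qed
    then show False using liA ab by simp
  qed
  have gA: "g \<in> Aspace n m Bs" if "g \<in> gens n m Bs" for g
    unfolding Aspace_def by (rule gen_in_span[OF gens_finite that gens_carrier[of n Bs m, OF B that]])
  have relC: "x$i*y$j = x$j*y$i" if xy: "x \<in> U" "y \<in> U" and ij: "i \<in> {..<n}" "j \<in> {..<n}" for x y i j
  proof -
    have xyc: "x \<in> carrier_vec (n+m)" "y \<in> carrier_vec (n+m)" using xy Uc by auto
    have g: "x$p*y$q - x$q*y$p = 0" if "p < q" "q < n" for p q
    proof -
      have "alt_unit (n+m) p q \<in> gens n m Bs" using that unfolding gens_def by blast
      then have "x \<bullet> (alt_unit (n+m) p q *\<^sub>v y) = 0" using Z[OF xy gA] by blast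
      moreover have "x \<bullet> (alt_unit (n+m) p q *\<^sub>v y) = x$p*y$q - x$q*y$p"
        using that xyc by (intro alt_unit_form) auto
      ultimately show ?thesis by simp
    qed
    show ?thesis
    proof (cases i j rule: linorder_cases)
      case less then show ?thesis using g[of i j] ij by simp
    next
      case equal then show ?thesis by (simp add: mult.commute)
    next
      case greater then show ?thesis using g[of j i] ij by (simp add: mult.commute)
    qed
  qed
  have relD: "x$i*y$j = x$j*y$i" if xy: "x \<in> U" "y \<in> U" and ij: "i \<in> {n..<n+m}" "j \<in> {n..<n+m}" for x y i j
  proof -
    have xyc: "x \<in> carrier_vec (n+m)" "y \<in> carrier_vec (n+m)" using xy Uc by auto
    have g: "x$(n+p)*y$(n+q) - x$(n+q)*y$(n+p) = 0" if "p < q" "q < m" for p q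
    proof -
      have "alt_unit (n+m) (n+p) (n+q) \<in> gens n m Bs" using that unfolding gens_def by blast
      then have "x \<bullet> (alt_unit (n+m) (n+p) (n+q) *\<^sub>v y) = 0" using Z[OF xy gA] by blast
      moreover have "x \<bullet> (alt_unit (n+m) (n+p) (n+q) *\<^sub>v y) = x$(n+p)*y$(n+q) - x$(n+q)*y$(n+p)"
        using that xyc by (intro alt_unit_form) auto
      ultimately show ?thesis by simp
    qed
    obtain p q where pq: "i = n+p" "j = n+q" "p < m" "q < m" using ij
      by (metis add_diff_inverse_nat atLeastLessThan_iff nat_add_left_cancel_less not_less)
    show ?thesis
    proof (cases p q rule: linorder_cases)
      case less then show ?thesis using g[of p q] pq by simp
    next
      case equal then show ?thesis using pq by (simp add: mult.commute)
    next
      case greater then show ?thesis using g[of q p] pq by (simp add: mult.commute)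
    qed
  qed
  obtain c where c: "c \<in> U" "c \<noteq> 0\<^sub>v (n+m)" "\<forall>i\<in>{..<n}. c$i = 0"
    using find_zero_combo[where I="{..<n}", OF submod abU Uc indep relC[OF abU]] by auto
  have IN2: "{n..<n+m} \<subseteq> {..<n+m}" by (simp add: subset_eq)
  obtain d where d: "d \<in> U" "d \<noteq> 0\<^sub>v (n+m)" "\<forall>i\<in>{n..<n+m}. d$i = 0"
    using find_zero_combo[where I="{n..<n+m}", OF submod abU Uc indep relD[OF abU] IN2] by auto
  have cc: "c \<in> carrier_vec (n+m)" and dc: "d \<in> carrier_vec (n+m)" using c d Uc by auto
  define v where "v = vec_last c m"
  define w where "w = vec_first d n"
  have ce: "c = 0\<^sub>v n @\<^sub>v v"
    unfolding v_def using cc c(3) by (intro eq_vecI) (auto simp: vec_last_def)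
  have de: "d = w @\<^sub>v 0\<^sub>v m"
    unfolding w_def using dc d(3) by (intro eq_vecI) (auto simp: vec_first_def)
  have vc: "v \<in> carrier_vec m" and wc: "w \<in> carrier_vec n" unfolding v_def w_def by auto
  have vnz: "v \<noteq> 0\<^sub>v m"
  proof
    assume "v = 0\<^sub>v m"
    then have "c = 0\<^sub>v (n+m)" unfolding ce by (intro eq_vecI) auto
    then show False using c(2) by simp
  qed
  have wnz: "w \<noteq> 0\<^sub>v n"
  proof
    assume "w = 0\<^sub>v n"
    then have "d = 0\<^sub>v (n+m)" unfolding de by (intro eq_vecI) auto
    then show False using d(2) by simp
  qed
  have wB: "\<forall>i<n. w \<bullet> (Bs i *\<^sub>v v) = 0"
  proof (intro allI impI)
    fix i assume i: "i < n"
    have Bi: "Bs i \<in> carrier_mat n m" using B i by auto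
    have "block_alt n m (Bs i) \<in> gens n m Bs" using i unfolding gens_def by blast
    then have "d \<bullet> (block_alt n m (Bs i) *\<^sub>v c) = 0" using Z[OF d(1) c(1) gA] by blast
    moreover have "d \<bullet> (block_alt n m (Bs i) *\<^sub>v c) = w \<bullet> (Bs i *\<^sub>v v) - 0\<^sub>v n \<bullet> (Bs i *\<^sub>v 0\<^sub>v m)"
      unfolding ce de by (rule block_form[OF Bi wc _ _ vc]) auto
    moreover have "0\<^sub>v n \<bullet> (Bs i *\<^sub>v 0\<^sub>v m) = 0" using Bi by simp
    ultimately show "w \<bullet> (Bs i *\<^sub>v v) = 0" by simp
  qed
  have "transpose_mat (deg_matrix n Bs v) *\<^sub>v w = 0\<^sub>v n" using degT[of n Bs m, OF B vc wc] wB by blast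
  then have "right_degree n Bs v < n" unfolding rd_lt_iff using wc wnz by blast
  then show ?thesis using vc vnz by blast
qed


theorem claim7p4:
  fixes n m :: nat and Bs :: "nat \<Rightarrow> 'a::field mat"
  assumes "n \<ge> 1" and "m \<ge> 1"
    and "\<And>i. i < n \<Longrightarrow> Bs i \<in> carrier_mat n m"
  shows "(\<exists>v \<in> carrier_vec m. v \<noteq> 0\<^sub>v m \<and> right_degree n Bs v < n)
     \<longleftrightarrow> (\<exists>U. isotropic (n+m) (Aspace n m Bs) U \<and> subspace_dim (n+m) U = 2)"
proof
  assume "\<exists>v \<in> carrier_vec m. v \<noteq> 0\<^sub>v m \<and> right_degree n Bs v < n"
  then obtain v where "v \<in> carrier_vec m" "v \<noteq> 0\<^sub>v m" "right_degree n Bs v < n" by blast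
  then show "\<exists>U. isotropic (n+m) (Aspace n m Bs) U \<and> subspace_dim (n+m) U = 2"
    using fwd[of n Bs m, OF assms(3)] by blast
next
  assume "\<exists>U. isotropic (n+m) (Aspace n m Bs) U \<and> subspace_dim (n+m) U = 2"
  then obtain U where "isotropic (n+m) (Aspace n m Bs) U" "subspace_dim (n+m) U = 2" by blast
  then show "\<exists>v \<in> carrier_vec m. v \<noteq> 0\<^sub>v m \<and> right_degree n Bs v < n"
    using bwd[of n Bs m, OF assms(3)] by blast
qed

end
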